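(* Let $E_1\subset\mathbb{R}^n$ be a closed Euclidean ball with center $c$ and radius $R>0$, and let $\mathcal{Y}_*\subset E_1$ be a convex set containing a Euclidean ball $\{y:\|y-y_*\|_2\leq\rho_*\}$ of radius $\rho_*>0$. Consider an oracle which, when queried at a point $y\in\mathbb{R}^n$, either returns nothing ("gets stuck") or returns an affine function $f:\mathbb{R}^n\to\mathbb{R}$ with $\|\nabla f\|_2=1$, $f(y)\geq 0$ and $f(z)\leq 0$ for all $z\in\mathcal{Y}_*$ (a "separator"). The Bundle-Level (BL) algorithm queries the oracle at points $y^1,y^2,\dots$ defined as follows: $y^1=c$; if at steps $1,\dots,s-1$ the oracle returned separators $f_1,\dots,f_{s-1}$, set $f^{s-1}(y)=\max_{r<s}f_r(y)$, $\Delta_{s-1}=\min_{y\in E_1}f^{s-1}(y)$, and $$y^s=\mathrm{argmin}_y\Big\{\|y^{s-1}-y\|_2:\ y\in E_1,\ f^{s-1}(y)\leq \tfrac12\Delta_{s-1}\Big\};$$ the algorithm terminates at the first step at which the oracle returns nothing. Then for every $s\geq 1$ such that the oracle returned separators at steps $1,\dots,s$, one has $\Delta_s\leq-\rho_*$ (in particular all points $y^s$ are well defined). Moreover, if the oracle returned separators at each of the steps $1,\dots,S$, then $S\leq 32R^2/\rho_*^2$; hence BL terminates after at most $32R^2/\rho_*^2+1$ steps. *)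

theory Defs
  imports "HOL-Analysis.Analysis"
begin

definition BL_model :: "(nat \<Rightarrow> 'a \<Rightarrow> real) \<Rightarrow> nat \<Rightarrow> 'a \<Rightarrow> real" where
  "BL_model f s y = Max ((\<lambda>r. f r y) ` {1..s})"

definition BL_gap :: "(nat \<Rightarrow> 'a::metric_space \<Rightarrow> real) \<Rightarrow> nat \<Rightarrow> 'a \<Rightarrow> real \<Rightarrow> real" where
  "BL_gap f s c R = (INF y\<in>cball c R. BL_model f s y)"

definition BL_level_set :: "(nat \<Rightarrow> 'a::metric_space \<Rightarrow> real) \<Rightarrow> nat \<Rightarrow> 'a \<Rightarrow> real \<Rightarrow> 'a set" where
  "BL_level_set f s c R = {y \<in> cball c R. BL_model f s y \<le> BL_gap f s c R / 2}"

end

theory Submission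
  imports Defs
begin

lemma proj_ineq:
  fixes x p z :: "'a::real_inner"
  assumes "convex L" "p \<in> L" "z \<in> L" "\<forall>w\<in>L. dist x p \<le> dist x w"
  shows "(norm (p - z))\<^sup>2 + (norm (x - p))\<^sup>2 \<le> (norm (x - z))\<^sup>2"
proof -
  have ip: "inner (x - p) (z - p) \<le> 0"
  proof (rule ccontr)
    assume "\<not> ?thesis"
    then obtain u where u: "u>0" "u\<le>1" "dist (p + u *\<^sub>R (z - p)) x < dist p x"
      using closer_point_lemma[of x p z] by auto
    let ?z = "(1 - u) *\<^sub>R p + u *\<^sub>R z"
    have "?z \<in> L"
      using convexD_alt[OF assms(1,2,3), of u] using u by auto
    then show False
      using assms(4)[THEN bspec[where x="?z"]] and u(3)
      by (auto simp: dist_commute algebra_simps)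
  qed
  have "(norm (x - z))\<^sup>2 = (norm (x - p))\<^sup>2 + (norm (p - z))\<^sup>2 - 2 * inner (x - p) (z - p)"
    unfolding power2_norm_eq_inner by (simp add: inner_diff_left inner_diff_right inner_commute algebra_simps)
  then show ?thesis using ip by linarith
qed

lemma model_ge:
  assumes "r \<in> {1..s}"
  shows "f r y \<le> BL_model f s y"
  unfolding BL_model_def using assms by (intro Max_ge) auto

lemma model_le:
  assumes "1 \<le> s" "\<And>r. r \<in> {1..s} \<Longrightarrow> f r y \<le> x"
  shows "BL_model f s y \<le> x"
  unfolding BL_model_def using assms by (subst Max_le_iff) auto


theorem proposition1:
  fixes c y_star :: "'a::euclidean_space" and R \<rho> :: real and Y :: "'a set"
    and f :: "nat \<Rightarrow> 'a \<Rightarrow> real" and y :: "nat \<Rightarrow> 'a" and S :: nat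
  assumes "R > 0" and "\<rho> > 0"
    and "convex Y" and "Y \<subseteq> cball c R" and "cball y_star \<rho> \<subseteq> Y"
    and affine: "\<forall>s\<in>{1..S}. \<exists>g b. norm g = 1 \<and> (\<forall>z. f s z = inner g z + b)"
    and sep: "\<forall>s\<in>{1..S}. f s (y s) \<ge> 0 \<and> (\<forall>z\<in>Y. f s z \<le> 0)"
    and first: "y 1 = c"
    and step: "\<forall>s\<in>{2..S}. y s \<in> BL_level_set f (s - 1) c R \<and>
                 (\<forall>z\<in>BL_level_set f (s - 1) c R. dist (y (s - 1)) (y s) \<le> dist (y (s - 1)) z)"
  shows "(\<forall>s\<in>{1..S}. BL_gap f s c R \<le> - \<rho>) \<and> real S \<le> 32 * R\<^sup>2 / \<rho>\<^sup>2"
proof -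
  define \<Delta> where "\<Delta> s = BL_gap f s c R" for s
  from affine have "\<forall>s\<in>{1..S}. \<exists>p. norm (fst p) = 1 \<and> (\<forall>z. f s z = inner (fst p) z + snd p)"
    by auto
  then obtain P where P: "\<forall>s\<in>{1..S}. norm (fst (P s)) = 1 \<and> (\<forall>z. f s z = inner (fst (P s)) z + snd (P s))"
    by (metis bchoice)
  define G where "G s = fst (P s)" for s
  define B where "B s = snd (P s)" for s
  have GB: "norm (G s) = 1" "\<And>z. f s z = inner (G s) z + B s" if "s \<in> {1..S}" for s
    using P that unfolding G_def B_def by auto
  have aff_comb: "f r (u *\<^sub>R x + v *\<^sub>R z) = u * f r x + v * f r z"
    if "r \<in> {1..S}" "u + v = 1" for r u v x z
  proof -
    have "f r (u *\<^sub>R x + v *\<^sub>R z) = u * inner (G r) x + v * inner (G r) z + (u + v) * B r"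
      using GB(2)[OF that(1)] that(2) by (simp add: inner_add_right)
    also have "\<dots> = u * f r x + v * f r z"
      using GB(2)[OF that(1)] by (simp add: algebra_simps)
    finally show ?thesis .
  qed
  have Mconv: "convex_on UNIV (BL_model f s)" if "1 \<le> s" "s \<le> S" for s
  proof (rule convex_onI)
    fix t x z :: 'a and u :: real
    assume t: "0 < u" "u < 1"
    show "BL_model f s ((1 - u) *\<^sub>R x + u *\<^sub>R z) \<le> (1 - u) * BL_model f s x + u * BL_model f s z"
    proof (rule model_le[OF that(1)])
      fix r assume r: "r \<in> {1..s}"
      then have rS: "r \<in> {1..S}" using that by auto
      have "f r ((1 - u) *\<^sub>R x + u *\<^sub>R z) = (1 - u) * f r x + u * f r z"
        using aff_comb[OF rS] by simp
      also have "\<dots> \<le> (1 - u) * BL_model f s x + u * BL_model f s z"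
        using model_ge[OF r, of f x] model_ge[OF r, of f z] t
        by (intro add_mono mult_left_mono) auto
      finally show "f r ((1 - u) *\<^sub>R x + u *\<^sub>R z) \<le> (1 - u) * BL_model f s x + u * BL_model f s z" .
    qed
  qed simp
  have Mmin: "\<exists>u\<in>cball c R. \<Delta> s = BL_model f s u \<and> (\<forall>z\<in>cball c R. \<Delta> s \<le> BL_model f s z)"
    if "1 \<le> s" "s \<le> S" for s
  proof -
    have cont: "continuous_on (cball c R) (BL_model f s)"
      using convex_on_continuous[OF open_UNIV Mconv[OF that]] continuous_on_subset by blast
    have ne: "cball c R \<noteq> {}" using \<open>R > 0\<close> by auto
    obtain u where u: "u \<in> cball c R" "\<forall>z\<in>cball c R. BL_model f s u \<le> BL_model f s z"
      using continuous_attains_inf[OF compact_cball ne cont] by blast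
    have bdd: "bdd_below (BL_model f s ` cball c R)"
      using u(2) by (auto intro: bdd_belowI2)
    have eq: "\<Delta> s = BL_model f s u"
      unfolding \<Delta>_def BL_gap_def
    proof (rule antisym)
      show "(INF y\<in>cball c R. BL_model f s y) \<le> BL_model f s u"
        using bdd u(1) by (rule cINF_lower)
      show "BL_model f s u \<le> (INF y\<in>cball c R. BL_model f s y)"
        using ne u(2) by (intro cINF_greatest) auto
    qed
    show ?thesis using u eq by auto
  qed
  have Mmono: "BL_model f s x \<le> BL_model f t x" if "1 \<le> s" "s \<le> t" for s t x
    using that by (intro model_le model_ge) auto
  have \<Delta>mono: "\<Delta> s \<le> \<Delta> t" if st: "1 \<le> s" "s \<le> t" "t \<le> S" for s t
  proof -
    obtain ut where ut: "ut \<in> cball c R" "\<Delta> t = BL_model f t ut"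
      using Mmin[of t] st by (meson order_trans)
    have "\<Delta> s \<le> BL_model f s ut" using Mmin[of s] st ut(1) by (meson order_trans)
    also have "\<dots> \<le> BL_model f t ut" using Mmono st by auto
    finally show ?thesis using ut by simp
  qed
  have ycball: "y s \<in> cball c R" if "s \<in> {1..S}" for s
  proof (cases "s = 1")
    case True then show ?thesis using first \<open>R > 0\<close> by simp
  next
    case False
    then have "s \<in> {2..S}" using that by auto
    then show ?thesis using step unfolding BL_level_set_def by auto
  qed
  have "y_star \<in> cball y_star \<rho>" using \<open>\<rho> > 0\<close> by simp
  then have ystar: "y_star \<in> cball c R" using assms(4,5) by blast
  have fstar: "f r y_star \<le> - \<rho>" if r: "r \<in> {1..S}" for r
  proof -
    have "y_star + \<rho> *\<^sub>R G r \<in> cball y_star \<rho>"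
      using GB(1)[OF r] \<open>\<rho> > 0\<close> by (simp add: dist_norm)
    then have "f r (y_star + \<rho> *\<^sub>R G r) \<le> 0" using sep r assms(5) by auto
    moreover have "f r (y_star + \<rho> *\<^sub>R G r) = f r y_star + \<rho> * inner (G r) (G r)"
      using GB(2)[OF r] by (simp add: inner_add_right)
    moreover have "inner (G r) (G r) = 1" using GB(1)[OF r] by (simp add: power2_norm_eq_inner[symmetric])
    ultimately show ?thesis by simp
  qed
  have gapneg: "\<Delta> s \<le> - \<rho>" if "s \<in> {1..S}" for s
  proof -
    have "\<Delta> s \<le> BL_model f s y_star" using Mmin[of s] that ystar by auto
    also have "\<dots> \<le> - \<rho>" using that fstar by (intro model_le) auto
    finally show ?thesis .
  qed
  have Lconv: "convex (BL_level_set f s c R)" if "1 \<le> s" "s \<le> S" for s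
  proof (rule convexI)
    fix x z :: 'a and u v :: real
    assume xz: "x \<in> BL_level_set f s c R" "z \<in> BL_level_set f s c R" and uv: "0 \<le> u" "0 \<le> v" "u + v = 1"
    have "u *\<^sub>R x + v *\<^sub>R z \<in> cball c R"
      using xz uv convexD[OF convex_cball[of c R]] unfolding BL_level_set_def by auto
    moreover have "BL_model f s (u *\<^sub>R x + v *\<^sub>R z) \<le> BL_gap f s c R / 2"
    proof (rule model_le[OF that(1)])
      fix r assume r: "r \<in> {1..s}"
      then have rS: "r \<in> {1..S}" using that by auto
      have "f r (u *\<^sub>R x + v *\<^sub>R z) = u * f r x + v * f r z" using aff_comb[OF rS uv(3)] .
      also have "\<dots> \<le> u * (BL_gap f s c R / 2) + v * (BL_gap f s c R / 2)"
        using model_ge[OF r, of f x] model_ge[OF r, of f z] xz uv unfolding BL_level_set_def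
        by (intro add_mono mult_left_mono) auto
      also have "\<dots> = BL_gap f s c R / 2" using uv(3) by (metis distrib_right mult_1 add_divide_distrib times_divide_eq_right)
      finally show "f r (u *\<^sub>R x + v *\<^sub>R z) \<le> BL_gap f s c R / 2" .
    qed
    ultimately show "u *\<^sub>R x + v *\<^sub>R z \<in> BL_level_set f s c R" unfolding BL_level_set_def by auto
  qed
  have proj: "(norm (y (s+1) - z))\<^sup>2 + (norm (y s - y (s+1)))\<^sup>2 \<le> (norm (y s - z))\<^sup>2"
    if "1 \<le> s" "s + 1 \<le> S" "z \<in> BL_level_set f s c R" for s z
  proof -
    have "Suc s \<in> {2..S}" using that by auto
    from step[rule_format, OF this] have st: "y (s+1) \<in> BL_level_set f s c R"
      "\<forall>w\<in>BL_level_set f s c R. dist (y s) (y (s+1)) \<le> dist (y s) w"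
      by auto
    show ?thesis using proj_ineq[OF Lconv[of s] st(1) that(3) st(2)] that by auto
  qed
  have steplen: "- \<Delta> s / 2 \<le> norm (y s - y (s+1))" if "1 \<le> s" "s + 1 \<le> S" for s
  proof -
    have sS: "s \<in> {1..S}" using that by auto
    have "Suc s \<in> {2..S}" using that by auto
    from step[rule_format, OF this] have st: "y (s+1) \<in> BL_level_set f s c R" by auto
    have "f s (y (s+1)) \<le> BL_model f s (y (s+1))" using model_ge[of s s] that by auto
    also have "\<dots> \<le> \<Delta> s / 2" using st unfolding BL_level_set_def \<Delta>_def by auto
    finally have a: "f s (y (s+1)) \<le> \<Delta> s / 2" .
    have b: "0 \<le> f s (y s)" using sep sS by auto
    have "f s (y s) - f s (y (s+1)) = inner (G s) (y s - y (s+1))"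
      using GB(2)[OF sS] by (simp add: inner_diff_right)
    also have "\<dots> \<le> norm (G s) * norm (y s - y (s+1))" by (rule norm_cauchy_schwarz)
    also have "\<dots> = norm (y s - y (s+1))" using GB(1)[OF sS] by simp
    finally show ?thesis using a b by linarith
  qed
  have phase: "real (t + 1 - a) * (\<Delta> t)\<^sup>2 \<le> 16 * R\<^sup>2"
    if at: "1 \<le> a" "a \<le> t" "t + 1 \<le> S" and ph: "\<forall>s\<in>{a..t}. - \<Delta> s \<le> 2 * (- \<Delta> t)" for a t
  proof -
    obtain u where u: "u \<in> cball c R" "\<Delta> t = BL_model f t u"
    proof -
      have "1 \<le> t" "t \<le> S" using at by auto
      from Mmin[OF this] show ?thesis using that by blast
    qed
    have tneg: "\<Delta> t \<le> - \<rho>" using gapneg at by auto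
    have inL: "u \<in> BL_level_set f s c R" if s: "s \<in> {a..t}" for s
    proof -
      have "BL_model f s u \<le> BL_model f t u" using Mmono s at by auto
      also have "\<dots> \<le> \<Delta> s / 2" using u(2) ph s by fastforce
      finally show ?thesis using u(1) unfolding BL_level_set_def \<Delta>_def by auto
    qed
    have dec: "(norm (y (s+1) - u))\<^sup>2 \<le> (norm (y s - u))\<^sup>2 - (\<Delta> t)\<^sup>2 / 4"
      if s: "s \<in> {a..t}" for s
    proof -
      have "- \<Delta> t / 2 \<le> - \<Delta> s / 2" using \<Delta>mono[of s t] s at by auto
      also have "\<dots> \<le> norm (y s - y (s+1))" using steplen[of s] s at by auto
      finally have "(- \<Delta> t / 2)\<^sup>2 \<le> (norm (y s - y (s+1)))\<^sup>2"
        using tneg \<open>\<rho> > 0\<close> by (intro power_mono) auto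
      moreover have "(- \<Delta> t / 2)\<^sup>2 = (\<Delta> t)\<^sup>2 / 4" by (simp add: power2_eq_square)
      moreover have "(norm (y (s+1) - u))\<^sup>2 + (norm (y s - y (s+1)))\<^sup>2 \<le> (norm (y s - u))\<^sup>2"
        using proj[of s u] inL[OF s] s at by auto
      ultimately show ?thesis by linarith
    qed
    have iter: "(norm (y (a+k) - u))\<^sup>2 \<le> (norm (y a - u))\<^sup>2 - real k * (\<Delta> t)\<^sup>2 / 4"
      if "k \<le> t + 1 - a" for k
      using that
    proof (induction k)
      case 0 then show ?case by simp
    next
      case (Suc k)
      have "a + k \<in> {a..t}" using Suc.prems by auto
      then have "(norm (y (a + k + 1) - u))\<^sup>2 \<le> (norm (y (a+k) - u))\<^sup>2 - (\<Delta> t)\<^sup>2 / 4"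
        by (rule dec)
      with Suc.IH Suc.prems show ?case by (simp add: algebra_simps add_divide_distrib)
    qed
    have k: "(norm (y (t+1) - u))\<^sup>2 \<le> (norm (y a - u))\<^sup>2 - real (t + 1 - a) * (\<Delta> t)\<^sup>2 / 4"
      using iter[of "t + 1 - a"] at by simp
    have "norm (y a - u) \<le> norm (y a - c) + norm (c - u)" by (metis norm_triangle_ineq diff_add_cancel add_diff_eq)
    also have "\<dots> \<le> 2 * R"
      using ycball[of a] u(1) at by (simp add: dist_norm norm_minus_commute)
    finally have "(norm (y a - u))\<^sup>2 \<le> (2 * R)\<^sup>2" by (intro power_mono) auto
    moreover have "(2 * R)\<^sup>2 = 4 * R\<^sup>2" by (simp add: power2_eq_square)
    ultimately show ?thesis using k zero_le_power2[of "norm (y (t+1) - u)"] by linarith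
  qed
  have main: "1 \<le> t \<longrightarrow> t + 1 \<le> S \<longrightarrow> real t * (\<Delta> t)\<^sup>2 \<le> 24 * R\<^sup>2" for t
  proof (induction t rule: less_induct)
    case (less t)
    show ?case
    proof (intro impI)
      assume t: "1 \<le> t" "t + 1 \<le> S"
      have tneg: "\<Delta> t \<le> - \<rho>" using gapneg t by auto
      define A where "A = {s\<in>{1..t}. - \<Delta> s > 2 * (- \<Delta> t)}"
      show "real t * (\<Delta> t)\<^sup>2 \<le> 24 * R\<^sup>2"
      proof (cases "A = {}")
        case True
        then have "\<forall>s\<in>{1..t}. - \<Delta> s \<le> 2 * (- \<Delta> t)" by (force simp: A_def not_less)
        from phase[OF _ _ t(2) this] t have "real t * (\<Delta> t)\<^sup>2 \<le> 16 * R\<^sup>2" by simp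
        then show ?thesis by (smt (verit) zero_le_power2)
      next
        case False
        define m where "m = Max A"
        have finA: "finite A" unfolding A_def by auto
        have mA: "m \<in> A" using Max_in[OF finA False] m_def by simp
        have mge: "\<And>s. s \<in> A \<Longrightarrow> s \<le> m" using Max_ge[OF finA] m_def by simp
        have m1: "1 \<le> m" "m \<le> t" and mD: "- \<Delta> m > 2 * (- \<Delta> t)" using mA unfolding A_def by auto
        have "m \<noteq> t" using mD tneg \<open>\<rho> > 0\<close> by auto
        then have mt: "m < t" using m1 by auto
        have IH: "real m * (\<Delta> m)\<^sup>2 \<le> 24 * R\<^sup>2" using less.IH[OF mt] m1 t by auto
        have "(2 * (- \<Delta> t))\<^sup>2 \<le> (- \<Delta> m)\<^sup>2"
          using mD tneg \<open>\<rho> > 0\<close> by (intro power_mono) auto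
        then have "4 * (\<Delta> t)\<^sup>2 \<le> (\<Delta> m)\<^sup>2" by (simp add: power2_eq_square)
        then have "real m * (4 * (\<Delta> t)\<^sup>2) \<le> real m * (\<Delta> m)\<^sup>2" by (intro mult_left_mono) auto
        with IH have h1: "real m * (\<Delta> t)\<^sup>2 \<le> 6 * R\<^sup>2" by simp
        have "\<forall>s\<in>{m+1..t}. - \<Delta> s \<le> 2 * (- \<Delta> t)"
        proof
          fix s assume s: "s \<in> {m+1..t}"
          then have "s \<notin> A" using mge by force
          then show "- \<Delta> s \<le> 2 * (- \<Delta> t)" using s m1 unfolding A_def by auto
        qed
        from phase[OF _ _ t(2) this] mt m1 have "real (t + 1 - (m + 1)) * (\<Delta> t)\<^sup>2 \<le> 16 * R\<^sup>2" by simp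
        moreover have "real (t + 1 - (m + 1)) = real t - real m" using mt by simp
        ultimately have "(real t - real m) * (\<Delta> t)\<^sup>2 \<le> 16 * R\<^sup>2" by simp
        with h1 show ?thesis by (smt (verit) zero_le_power2 left_diff_distrib)
      qed
    qed
  qed
  obtain e :: 'a where e: "e \<in> Basis" using nonempty_Basis by blast
  have ne: "norm e = 1" using norm_Basis[OF e] .
  have p1: "y_star + \<rho> *\<^sub>R e \<in> cball c R" "y_star - \<rho> *\<^sub>R e \<in> cball c R"
    using assms(4,5) ne \<open>\<rho> > 0\<close> by (auto simp: dist_norm subset_iff)
  have "2 * \<rho> = norm ((y_star + \<rho> *\<^sub>R e - c) - (y_star - \<rho> *\<^sub>R e - c))"
    using ne \<open>\<rho> > 0\<close> by (simp add: scaleR_2[symmetric])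
  also have "\<dots> \<le> norm (y_star + \<rho> *\<^sub>R e - c) + norm (y_star - \<rho> *\<^sub>R e - c)" by (rule norm_triangle_ineq4)
  also have "\<dots> \<le> 2 * R" using p1 by (simp add: dist_norm norm_minus_commute)
  finally have rR: "\<rho> \<le> R" by simp
  have rR2: "\<rho>\<^sup>2 \<le> R\<^sup>2" using rR \<open>\<rho> > 0\<close> by (intro power_mono) auto
  have "real S * \<rho>\<^sup>2 \<le> 32 * R\<^sup>2"
  proof (cases "S \<le> 1")
    case True
    then have "real S \<le> 1" by simp
    then have "real S * \<rho>\<^sup>2 \<le> 1 * \<rho>\<^sup>2" by (intro mult_right_mono) auto
    then show ?thesis using rR2 by (smt (verit) zero_le_power2)
  next
    case False
    have m: "real (S - 1) * (\<Delta> (S - 1))\<^sup>2 \<le> 24 * R\<^sup>2" using main[of "S - 1"] False by auto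
    have "\<Delta> (S - 1) \<le> - \<rho>" using gapneg False by auto
    then have "\<rho>\<^sup>2 \<le> (\<Delta> (S - 1))\<^sup>2" using \<open>\<rho> > 0\<close> by (smt (verit) power_mono power2_minus)
    then have "real (S - 1) * \<rho>\<^sup>2 \<le> real (S - 1) * (\<Delta> (S - 1))\<^sup>2" by (intro mult_left_mono) auto
    moreover have "real S = real (S - 1) + 1" using False by simp
    moreover have "real S * \<rho>\<^sup>2 = real (S - 1) * \<rho>\<^sup>2 + \<rho>\<^sup>2"
      by (metis \<open>real S = real (S - 1) + 1\<close> distrib_right mult_1)
    ultimately show ?thesis using m rR2 zero_le_power2[of R] by linarith
  qed
  then have "real S \<le> 32 * R\<^sup>2 / \<rho>\<^sup>2" using \<open>\<rho> > 0\<close> by (simp add: pos_le_divide_eq)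
  moreover have "\<forall>s\<in>{1..S}. BL_gap f s c R \<le> - \<rho>" using gapneg unfolding \<Delta>_def by auto
  ultimately show ?thesis by auto
qed

end
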